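(* Let $n\ge 2$, let $i,j\in\{1,\dots,n-1\}$, let $m\ge 1$ be an integer, and let $W\in B_n^+$. If $W\sigma_i^m=\sigma_j^m W$ in $B_n$, then $W\sigma_i=\sigma_j W$ in $B_n$.
   Context: $B_n$ is Artin's braid group with generators $\sigma_1,\dots,\sigma_{n-1}$ and relations $\sigma_i\sigma_j=\sigma_j\sigma_i$ for $|i-j|\ge 2$ and $\sigma_i\sigma_{i+1}\sigma_i=\sigma_{i+1}\sigma_i\sigma_{i+1}$. $B_n^+$ is the submonoid of $B_n$ of elements representable by positive braid words, i.e. words in $\sigma_1,\dots,\sigma_{n-1}$ without inverses. *)

theory Defs
  imports Main
begin

text \<open>Braid words: a letter (a, True) is sigma_a, (a, False) is sigma_a inverse.
  Generators are indexed 1, ..., n-1.\<close>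
type_synonym bword = "(nat \<times> bool) list"

inductive braid_eq :: "nat \<Rightarrow> bword \<Rightarrow> bword \<Rightarrow> bool" for n :: nat where
  refl: "braid_eq n w w"
| sym: "braid_eq n w v \<Longrightarrow> braid_eq n v w"
| trans: "braid_eq n u v \<Longrightarrow> braid_eq n v w \<Longrightarrow> braid_eq n u w"
| cancel: "1 \<le> a \<Longrightarrow> a < n \<Longrightarrow>
    braid_eq n (u @ [(a, e), (a, \<not> e)] @ v) (u @ v)"
| comm: "1 \<le> a \<Longrightarrow> a < n \<Longrightarrow> 1 \<le> b \<Longrightarrow> b < n \<Longrightarrow> (a + 2 \<le> b \<or> b + 2 \<le> a) \<Longrightarrow>
    braid_eq n (u @ [(a, True), (b, True)] @ v) (u @ [(b, True), (a, True)] @ v)"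
| braid: "1 \<le> a \<Longrightarrow> a + 1 < n \<Longrightarrow>
    braid_eq n (u @ [(a, True), (a + 1, True), (a, True)] @ v)
               (u @ [(a + 1, True), (a, True), (a + 1, True)] @ v)"

definition pos :: "nat list \<Rightarrow> bword" where
  "pos w = map (\<lambda>a. (a, True)) w"

end

theory Submission
  imports Defs
begin

definition far :: "nat \<Rightarrow> nat \<Rightarrow> bool" where "far a b \<longleftrightarrow> a + 2 \<le> b \<or> b + 2 \<le> a"
definition adj :: "nat \<Rightarrow> nat \<Rightarrow> bool" where "adj a b \<longleftrightarrow> b = Suc a \<or> a = Suc b"

lemma far_sym: "far a b \<Longrightarrow> far b a" by (auto simp: far_def)
lemma adj_sym: "adj a b \<Longrightarrow> adj b a" by (auto simp: adj_def)
lemma far_not_adj: "far a b \<Longrightarrow> \<not> adj a b" by (auto simp: far_def adj_def)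
lemma far_neq: "far a b \<Longrightarrow> a \<noteq> b" by (auto simp: far_def)
lemma adj_neq: "adj a b \<Longrightarrow> a \<noteq> b" by (auto simp: adj_def)
lemma trich: "a = b \<or> far a b \<or> adj a b" by (auto simp: far_def adj_def)
lemma adj_adj_far: "adj a c \<Longrightarrow> adj c b \<Longrightarrow> a \<noteq> b \<Longrightarrow> far a b" by (auto simp: far_def adj_def)

inductive prel :: "nat list \<Rightarrow> nat list \<Rightarrow> bool" where
  rf: "far a b \<Longrightarrow> prel [a,b] [b,a]"
| rb: "adj a b \<Longrightarrow> prel [a,b,a] [b,a,b]"

inductive pstep :: "nat list \<Rightarrow> nat list \<Rightarrow> bool" where
  st: "prel r r' \<Longrightarrow> pstep (u @ r @ v) (u @ r' @ v)"

abbreviation peq where "peq \<equiv> pstep\<^sup>*\<^sup>*"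

lemma prel_sym: "prel r r' \<Longrightarrow> prel r' r"
  by (induction rule: prel.induct) (auto intro: prel.intros far_sym adj_sym)

lemma pstep_sym: "pstep x y \<Longrightarrow> pstep y x"
  by (induction rule: pstep.induct) (auto intro: pstep.intros prel_sym)

lemma peq_sym: "peq x y \<Longrightarrow> peq y x"
proof (induction rule: rtranclp_induct)
  case base then show ?case by simp
next
  case (step y z)
  then show ?case by (meson converse_rtranclp_into_rtranclp pstep_sym)
qed

lemma peq_trans: "peq x y \<Longrightarrow> peq y z \<Longrightarrow> peq x z" by (rule rtranclp_trans)

lemma pstep_app: "pstep x y \<Longrightarrow> pstep (u@x@w) (u@y@w)"
proof (induction rule: pstep.induct)
  case (st r r' u' v)
  have "pstep ((u@u') @ r @ (v@w)) ((u@u') @ r' @ (v@w))" by (rule pstep.st[OF st])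
  then show ?case by simp
qed

lemma peq_app: "peq x y \<Longrightarrow> peq (u@x@w) (u@y@w)"
proof (induction rule: rtranclp_induct)
  case base then show ?case by simp
next
  case (step y z)
  then show ?case by (meson pstep_app rtranclp.rtrancl_into_rtrancl)
qed

lemma peq_appL: "peq x y \<Longrightarrow> peq (u@x) (u@y)" using peq_app[of x y u "[]"] by simp
lemma peq_appR: "peq x y \<Longrightarrow> peq (x@w) (y@w)" using peq_app[of x y "[]" w] by simp
lemma peq_Cons: "peq x y \<Longrightarrow> peq (a#x) (a#y)" using peq_app[of x y "[a]" "[]"] by simp
lemma peq_app2: "peq x x' \<Longrightarrow> peq y y' \<Longrightarrow> peq (x@y) (x'@y')"
  by (meson peq_appL peq_appR peq_trans)

lemma prel_set: "prel r r' \<Longrightarrow> set r = set r' \<and> length r = length r'"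
  by (induction rule: prel.induct) auto
lemma pstep_set: "pstep x y \<Longrightarrow> set x = set y \<and> length x = length y"
  by (induction rule: pstep.induct) (auto dest: prel_set)
lemma peq_sl: "peq x y \<Longrightarrow> set x = set y \<and> length x = length y"
  by (induction rule: rtranclp_induct) (auto dest: pstep_set)
lemma peq_length: "peq x y \<Longrightarrow> length x = length y"
  using peq_sl by blast
lemma peq_set: "peq x y \<Longrightarrow> set x = set y"
  using peq_sl by blast

lemma fc: "far x y \<Longrightarrow> peq (u @ x # y # w) (u @ y # x # w)"
  using pstep.st[OF rf, of x y u w] by auto
lemma bc: "adj x y \<Longrightarrow> peq (u @ x # y # x # w) (u @ y # x # y # w)"
  using pstep.st[OF rb, of x y u w] by auto
lemma fc0: "far x y \<Longrightarrow> peq (x # y # w) (y # x # w)"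
  using fc[of x y "[]"] by simp
lemma bc0: "adj x y \<Longrightarrow> peq (x # y # x # w) (y # x # y # w)"
  using bc[of x y "[]"] by simp

lemma pstep_Cons: "pstep (c#V) (b#Y) \<Longrightarrow> (c = b \<and> pstep V Y) \<or> (far c b \<and> (\<exists>v. V = b#v \<and> Y = c#v))
   \<or> (adj c b \<and> (\<exists>v. V = b#c#v \<and> Y = c#b#v))"
proof (induction "c#V" "b#Y" rule: pstep.induct)
  case (st r r' u v)
  show ?case
  proof (cases u)
    case Nil
    with st show ?thesis by (cases rule: prel.cases) auto
  next
    case (Cons x u')
    then have "c = b" "V = u'@r@v" "Y = u'@r'@v" using st by auto
    then show ?thesis using st by (auto intro: pstep.intros)
  qed
qed


lemma far_irr[simp]: "\<not> far a a" by (simp add: far_def)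
lemma adj_irr[simp]: "\<not> adj a a" by (simp add: adj_def)

definition R :: "nat \<Rightarrow> nat list \<Rightarrow> nat \<Rightarrow> nat list \<Rightarrow> bool" where
"R a X b Y \<longleftrightarrow> (a = b \<longrightarrow> peq X Y) \<and> (far a b \<longrightarrow> (\<exists>Z. peq X (b#Z) \<and> peq Y (a#Z)))
   \<and> (adj a b \<longrightarrow> (\<exists>Z. peq X (b#a#Z) \<and> peq Y (a#b#Z)))"

definition GH :: "nat \<Rightarrow> bool" where
"GH L \<longleftrightarrow> (\<forall>a b X Y. length X < L \<longrightarrow> peq (a#X) (b#Y) \<longrightarrow> R a X b Y)"

lemma GH_eq: "GH L \<Longrightarrow> length X < L \<Longrightarrow> peq (a#X) (a#Y) \<Longrightarrow> peq X Y"
  unfolding GH_def R_def by blast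
lemma GH_far: "GH L \<Longrightarrow> length X < L \<Longrightarrow> peq (a#X) (b#Y) \<Longrightarrow> far a b \<Longrightarrow> \<exists>Z. peq X (b#Z) \<and> peq Y (a#Z)"
  unfolding GH_def R_def by blast
lemma GH_adj: "GH L \<Longrightarrow> length X < L \<Longrightarrow> peq (a#X) (b#Y) \<Longrightarrow> adj a b \<Longrightarrow> \<exists>Z. peq X (b#a#Z) \<and> peq Y (a#b#Z)"
  unfolding GH_def R_def by blast

lemma R_right: "R a X b V \<Longrightarrow> peq V Y \<Longrightarrow> R a X b Y"
  unfolding R_def by (meson peq_sym peq_trans)

lemma R_refl: "R a X a X"
  unfolding R_def using far_neq adj_neq by auto

lemma caseA:
  assumes G: "GH (Suc (length v))" and R: "R a X c (b#v)" and fcb: "far c b"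
  shows "R a X b (c#v)"
proof -
  have "a = c \<or> far a c \<or> adj a c" using trich by blast
  moreover
  { assume "a = c"
    then have "peq X (b#v)" using R unfolding R_def by blast
    then have ?thesis using \<open>a = c\<close> fcb unfolding R_def by (auto dest: far_not_adj far_neq)
  }
  moreover
  { assume ac: "far a c" and "a \<noteq> c"
    then obtain Z1 where X: "peq X (c#Z1)" and V: "peq (b#v) (a#Z1)" using R unfolding R_def by blast
    have ?thesis
    proof -
      have "a = b \<or> far a b \<or> adj a b" using trich by blast
      moreover
      { assume "a = b"
        then have "peq v Z1" using GH_eq[OF G _ V[unfolded \<open>a=b\<close>]] by simp
        then have "peq X (c#v)" using X by (meson peq_Cons peq_sym peq_trans)
        then have ?thesis using \<open>a = b\<close> unfolding R_def by auto
      }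
      moreover
      { assume ab: "far a b"
        then obtain W where v: "peq v (a#W)" and Z1: "peq Z1 (b#W)"
          using GH_far[OF G _ V] far_sym by blast
        have "peq X (c#b#W)" using X Z1 by (meson peq_Cons peq_trans)
        also have "peq \<dots> (b#c#W)" using fc0 fcb by blast
        finally have 1: "peq X (b#c#W)" .
        have "peq (c#v) (c#a#W)" using v by (rule peq_Cons)
        also have "peq \<dots> (a#c#W)" using fc0 ac far_sym by blast
        finally have 2: "peq (c#v) (a#c#W)" .
        have ?thesis using 1 2 ab unfolding R_def by (auto dest: far_not_adj far_neq)
      }
      moreover
      { assume ab: "adj a b"
        then obtain W where v: "peq v (a#b#W)" and Z1: "peq Z1 (b#a#W)"
          using GH_adj[OF G _ V] adj_sym by blast
        have "peq X (c#b#a#W)" using X Z1 by (meson peq_Cons peq_trans)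
        also have "peq \<dots> (b#c#a#W)" using fc0 fcb by blast
        also have "peq \<dots> (b#a#c#W)" using fc[of c a "[b]"] ac far_sym by simp
        finally have 1: "peq X (b#a#c#W)" .
        have "peq (c#v) (c#a#b#W)" using v by (rule peq_Cons)
        also have "peq \<dots> (a#c#b#W)" using fc0 ac far_sym by blast
        also have "peq \<dots> (a#b#c#W)" using fc[of c b "[a]"] fcb by simp
        finally have 2: "peq (c#v) (a#b#c#W)" .
        have ?thesis using 1 2 ab unfolding R_def by (auto dest: adj_neq far_not_adj)
      }
      ultimately show ?thesis by blast
    qed
  }
  moreover
  { assume ac: "adj a c"
    then obtain Z1 where X: "peq X (c#a#Z1)" and V: "peq (b#v) (a#c#Z1)" using R unfolding R_def by blast
    have "a \<noteq> b" using ac fcb by (auto simp: adj_def far_def)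
    have ?thesis
    proof -
      have "far a b \<or> adj a b" using trich \<open>a \<noteq> b\<close> by blast
      moreover
      { assume ab: "far a b"
        then obtain W where v: "peq v (a#W)" and cZ1: "peq (c#Z1) (b#W)"
          using GH_far[OF G _ V] far_sym by blast
        have lZ1: "length Z1 < Suc (length v)" using peq_length[OF V] by simp
        obtain W' where Z1: "peq Z1 (b#W')" and W: "peq W (c#W')"
          using GH_far[OF G lZ1 cZ1 fcb] by blast
        have "peq X (c#a#b#W')" using X Z1 by (meson peq_Cons peq_trans)
        also have "peq \<dots> (c#b#a#W')" using fc[of a b "[c]"] ab by simp
        also have "peq \<dots> (b#c#a#W')" using fc0 fcb by blast
        finally have 1: "peq X (b#c#a#W')" .
        have "peq (c#v) (c#a#c#W')" using v W by (meson peq_Cons peq_trans)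
        also have "peq \<dots> (a#c#a#W')" using bc0 ac adj_sym by blast
        finally have 2: "peq (c#v) (a#c#a#W')" .
        have ?thesis using 1 2 ab unfolding R_def by (auto dest: far_not_adj far_neq)
      }
      moreover
      { assume ab: "adj a b"
        then obtain W where v: "peq v (a#b#W)" and cZ1: "peq (c#Z1) (b#a#W)"
          using GH_adj[OF G _ V] adj_sym by blast
        have lZ1: "length Z1 < Suc (length v)" using peq_length[OF V] by simp
        obtain W' where Z1: "peq Z1 (b#W')" and aW: "peq (a#W) (c#W')"
          using GH_far[OF G lZ1 cZ1 fcb] by blast
        have lW: "length W < Suc (length v)" using peq_length[OF v] by simp
        obtain W'' where W: "peq W (c#a#W'')" and W': "peq W' (a#c#W'')"
          using GH_adj[OF G lW aW ac] by blast
        have "peq X (c#a#b#a#c#W'')" using X Z1 W' by (meson peq_Cons peq_trans)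
        also have "peq \<dots> (c#b#a#b#c#W'')" using bc[of a b "[c]"] ab by simp
        also have "peq \<dots> (b#c#a#b#c#W'')" using fc0 fcb by blast
        also have "peq \<dots> (b#c#a#c#b#W'')" using fc[of b c "[b,c,a]"] fcb far_sym by simp
        also have "peq \<dots> (b#a#c#a#b#W'')" using bc[of c a "[b]"] ac adj_sym by simp
        finally have 1: "peq X (b#a#c#a#b#W'')" .
        have "peq (c#v) (c#a#b#c#a#W'')" using v W by (meson peq_Cons peq_trans)
        also have "peq \<dots> (c#a#c#b#a#W'')" using fc[of b c "[c,a]"] fcb far_sym by simp
        also have "peq \<dots> (a#c#a#b#a#W'')" using bc0 ac adj_sym by blast
        also have "peq \<dots> (a#c#b#a#b#W'')" using bc[of a b "[a,c]"] ab by simp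
        also have "peq \<dots> (a#b#c#a#b#W'')" using fc[of c b "[a]"] fcb by simp
        finally have 2: "peq (c#v) (a#b#c#a#b#W'')" .
        have ?thesis using 1 2 ab unfolding R_def by (auto dest: adj_neq far_not_adj)
      }
      ultimately show ?thesis by blast
    qed
  }
  ultimately show ?thesis by blast
qed

lemma caseB:
  assumes G: "GH (Suc (Suc (length v)))" and R: "R a X c (b#c#v)" and acb: "adj c b"
  shows "R a X b (c#b#v)"
proof -
  have "a = c \<or> far a c \<or> adj a c" using trich by blast
  moreover
  { assume "a = c"
    then have "peq X (b#c#v)" using R unfolding R_def by blast
    then have ?thesis using \<open>a = c\<close> acb unfolding R_def by (auto dest: far_not_adj adj_neq adj_sym)
  }
  moreover
  { assume ac: "far a c"
    then obtain Z1 where X: "peq X (c#Z1)" and V: "peq (b#c#v) (a#Z1)" using R unfolding R_def by blast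
    have "a \<noteq> b" using ac acb by (auto simp: adj_def far_def)
    have ?thesis
    proof -
      have "far a b \<or> adj a b" using trich \<open>a \<noteq> b\<close> by blast
      moreover
      { assume ab: "far a b"
        then obtain W where cv: "peq (c#v) (a#W)" and Z1: "peq Z1 (b#W)"
          using GH_far[OF G _ V] far_sym by fastforce
        obtain W' where v: "peq v (a#W')" and W: "peq W (c#W')"
          using GH_far[OF G _ cv] ac far_sym by fastforce
        have "peq X (c#b#c#W')" using X Z1 W by (meson peq_Cons peq_trans)
        also have "peq \<dots> (b#c#b#W')" using bc0 acb by blast
        finally have 1: "peq X (b#c#b#W')" .
        have "peq (c#b#v) (c#b#a#W')" using v by (meson peq_Cons)
        also have "peq \<dots> (c#a#b#W')" using fc[of b a "[c]"] ab far_sym by simp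
        also have "peq \<dots> (a#c#b#W')" using fc0 ac far_sym by blast
        finally have 2: "peq (c#b#v) (a#c#b#W')" .
        have ?thesis using 1 2 ab unfolding R_def by (auto dest: far_not_adj far_neq)
      }
      moreover
      { assume ab: "adj a b"
        then obtain W where cv: "peq (c#v) (a#b#W)" and Z1: "peq Z1 (b#a#W)"
          using GH_adj[OF G _ V] adj_sym by fastforce
        obtain W' where v: "peq v (a#W')" and bW: "peq (b#W) (c#W')"
          using GH_far[OF G _ cv] ac far_sym by fastforce
        have lW: "length W < Suc (Suc (length v))" using peq_length[OF cv] by simp
        obtain W'' where W: "peq W (c#b#W'')" and W': "peq W' (b#c#W'')"
          using GH_adj[OF G lW bW] acb adj_sym by blast
        have "peq X (c#b#a#c#b#W'')" using X Z1 W by (meson peq_Cons peq_trans)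
        also have "peq \<dots> (c#b#c#a#b#W'')" using fc[of a c "[c,b]"] ac by simp
        also have "peq \<dots> (b#c#b#a#b#W'')" using bc0 acb by blast
        also have "peq \<dots> (b#c#a#b#a#W'')" using bc[of b a "[b,c]"] ab adj_sym by simp
        also have "peq \<dots> (b#a#c#b#a#W'')" using fc[of c a "[b]"] ac far_sym by simp
        finally have 1: "peq X (b#a#c#b#a#W'')" .
        have "peq (c#b#v) (c#b#a#b#c#W'')" using v W' by (meson peq_Cons peq_trans)
        also have "peq \<dots> (c#a#b#a#c#W'')" using bc[of b a "[c]"] ab adj_sym by simp
        also have "peq \<dots> (a#c#b#a#c#W'')" using fc0 ac far_sym by blast
        also have "peq \<dots> (a#c#b#c#a#W'')" using fc[of a c "[a,c,b]"] ac by simp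
        also have "peq \<dots> (a#b#c#b#a#W'')" using bc[of c b "[a]"] acb by simp
        finally have 2: "peq (c#b#v) (a#b#c#b#a#W'')" .
        have ?thesis using 1 2 ab unfolding R_def by (auto dest: adj_neq far_not_adj)
      }
      ultimately show ?thesis by blast
    qed
  }
  moreover
  { assume ac: "adj a c" and "a \<noteq> b"
    then have ab: "far a b" using adj_adj_far acb by blast
    obtain Z1 where X: "peq X (c#a#Z1)" and V: "peq (b#c#v) (a#c#Z1)" using R ac unfolding R_def by blast
    obtain W where cv: "peq (c#v) (a#W)" and cZ1: "peq (c#Z1) (b#W)"
      using GH_far[OF G _ V] ab far_sym by fastforce
    have lZ1: "length Z1 < Suc (Suc (length v))" using peq_length[OF V] by simp
    obtain W1 where Z1: "peq Z1 (b#c#W1)" and W1: "peq W (c#b#W1)"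
      using GH_adj[OF G lZ1 cZ1] acb by blast
    obtain W2 where v: "peq v (a#c#W2)" and W2: "peq W (c#a#W2)"
      using GH_adj[OF G _ cv] ac adj_sym by fastforce
    have "peq (c#b#W1) (c#a#W2)" using W1 W2 by (meson peq_sym peq_trans)
    moreover have lW1: "length (b#W1) < Suc (Suc (length v))" using peq_length[OF W1] peq_length[OF cv] by simp
    ultimately have bW: "peq (b#W1) (a#W2)" using GH_eq[OF G] by blast
    have lW1': "length W1 < Suc (Suc (length v))" using lW1 by simp
    obtain W3 where W1': "peq W1 (a#W3)" and W2': "peq W2 (b#W3)"
      using GH_far[OF G lW1' bW far_sym[OF ab]] by blast
    have "peq X (c#a#b#c#a#W3)" using X Z1 W1' by (meson peq_Cons peq_trans)
    also have "peq \<dots> (c#b#a#c#a#W3)" using fc[of a b "[c]"] ab by simp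
    also have "peq \<dots> (c#b#c#a#c#W3)" using bc[of a c "[c,b]"] ac by simp
    also have "peq \<dots> (b#c#b#a#c#W3)" using bc0 acb by blast
    finally have 1: "peq X (b#c#b#a#c#W3)" .
    have "peq (c#b#v) (c#b#a#c#b#W3)" using v W2' by (meson peq_Cons peq_trans)
    also have "peq \<dots> (c#a#b#c#b#W3)" using fc[of b a "[c]"] ab far_sym by simp
    also have "peq \<dots> (c#a#c#b#c#W3)" using bc[of b c "[c,a]"] acb adj_sym by simp
    also have "peq \<dots> (a#c#a#b#c#W3)" using bc0 ac adj_sym by blast
    also have "peq \<dots> (a#c#b#a#c#W3)" using fc[of a b "[a,c]"] ab by simp
    finally have 2: "peq (c#b#v) (a#c#b#a#c#W3)" .
    have ?thesis using 1 2 ab unfolding R_def by (auto dest: far_not_adj far_neq)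
  }
  moreover
  { assume ac: "adj a c" and "a = b"
    obtain Z1 where X: "peq X (c#a#Z1)" and V: "peq (b#c#v) (a#c#Z1)" using R ac unfolding R_def by blast
    have "peq (c#v) (c#Z1)" using GH_eq[OF G _ V[unfolded \<open>a=b\<close>]] by simp
    then have "peq v Z1" using GH_eq[OF G] by fastforce
    then have "peq X (c#b#v)" using X \<open>a=b\<close> by (meson peq_Cons peq_sym peq_trans)
    then have ?thesis using \<open>a = b\<close> unfolding R_def by auto
  }
  ultimately show ?thesis by blast
qed

lemma garside_aux:
  assumes G: "GH (length X)" and P: "peq (a#X) W"
  shows "\<forall>b Y. W = b#Y \<longrightarrow> R a X b Y"
  using P
proof (induction rule: rtranclp_induct)
  case base then show ?case using R_refl by auto
next
  case (step W' W)
  show ?case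
  proof (intro allI impI)
    fix b Y assume WY: "W = b#Y"
    have "length W' = length W" using pstep_set[OF step(2)] by simp
    then obtain c V where W': "W' = c#V" using WY by (cases W') auto
    have RV: "R a X c V" using step(3) W' by simp
    have lV: "length V = length X" using peq_length[OF step(1)] W' by simp
    from pstep_Cons[OF step(2)[unfolded W' WY]]
    show "R a X b Y"
    proof (elim disjE conjE exE)
      assume "c = b" "pstep V Y" then show ?thesis using RV R_right by blast
    next
      fix v assume "far c b" "V = b#v" "Y = c#v"
      then show ?thesis using caseA[of v a X c b] RV G lV by simp
    next
      fix v assume "adj c b" "V = b#c#v" "Y = c#b#v"
      then show ?thesis using caseB[of v a X c b] RV G lV by simp
    qed
  qed
qed

lemma garside: "peq (a#X) (b#Y) \<Longrightarrow> R a X b Y"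
proof (induction "length X" arbitrary: a b X Y rule: less_induct)
  case less
  have "GH (length X)" unfolding GH_def using less by blast
  then show ?case using garside_aux less(2) by blast
qed

lemma cancel1: "peq (a#X) (a#Y) \<Longrightarrow> peq X Y"
  using garside unfolding R_def by blast

lemma cancelL: "peq (u@X) (u@Y) \<Longrightarrow> peq X Y"
  by (induction u) (auto dest: cancel1)

lemma prel_rev: "prel r r' \<Longrightarrow> prel (rev r) (rev r')"
  by (induction rule: prel.induct) (auto intro: prel.intros far_sym)

lemma pstep_rev: "pstep x y \<Longrightarrow> pstep (rev x) (rev y)"
proof (induction rule: pstep.induct)
  case (st r r' u v)
  have "pstep (rev v @ rev r @ rev u) (rev v @ rev r' @ rev u)" by (rule pstep.st[OF prel_rev[OF st]])
  then show ?case by simp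
qed

lemma peq_rev: "peq x y \<Longrightarrow> peq (rev x) (rev y)"
  by (induction rule: rtranclp_induct) (auto intro: rtranclp.rtrancl_into_rtrancl pstep_rev)

lemma cancelR: "peq (X@u) (Y@u) \<Longrightarrow> peq X Y"
  using peq_rev[of "X@u" "Y@u"] cancelL[of "rev u" "rev X" "rev Y"] peq_rev[of "rev X" "rev Y"] by simp


definition A :: "nat \<Rightarrow> nat list" where "A k = [1..<Suc k]"
definition B :: "nat \<Rightarrow> nat list" where "B k = rev (A k)"
fun delta :: "nat \<Rightarrow> nat list" where
  "delta 0 = []"
| "delta (Suc k) = A k @ delta k"

lemma far_comm: "\<forall>x\<in>set X. far c x \<Longrightarrow> peq (c#X) (X@[c])"
proof (induction X)
  case Nil then show ?case by simp
next
  case (Cons x X)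
  have "peq (c#x#X) (x#c#X)" using fc0 Cons.prems by simp
  also have "peq \<dots> (x#X@[c])" using Cons by (simp add: peq_Cons)
  finally show ?case by simp
qed

lemma A_split: "1 \<le> b \<Longrightarrow> b < k \<Longrightarrow> A k = [1..<b] @ b # Suc b # [b+2..<Suc k]"
proof -
  assume a: "1 \<le> b" "b < k"
  have "[1..<Suc k] = [1..<b] @ [b..<Suc k]" using a upt_add_eq_append[of 1 b "Suc k - b"] by simp
  also have "[b..<Suc k] = b # Suc b # [b+2..<Suc k]" using a by (simp add: upt_conv_Cons)
  finally show ?thesis unfolding A_def .
qed

lemma L2: assumes "1 \<le> b" "b < k" shows "peq (A k @ [b]) (Suc b # A k)"
proof -
  let ?p = "[1..<b]" and ?q = "[b+2..<Suc k]"
  have "A k @ [b] = ?p @ b # Suc b # (?q @ [b])" using A_split[OF assms] by simp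
  also have "peq \<dots> (?p @ b # Suc b # b # ?q)"
    using far_comm[of ?q b] peq_sym by (intro peq_appL peq_Cons) (auto simp: far_def)
  also have "peq \<dots> (?p @ Suc b # b # Suc b # ?q)"
    using bc[of b "Suc b" ?p ?q] by (simp add: adj_def)
  also have "peq \<dots> (Suc b # ?p @ b # Suc b # ?q)"
    using far_comm[of ?p "Suc b"] peq_sym peq_appR[of "Suc b # ?p" "?p @ [Suc b]" "b # Suc b # ?q"]
    by (auto simp: far_def)
  also have "\<dots> = Suc b # A k" using A_split[OF assms] by simp
  finally show ?thesis .
qed

lemma L3: assumes "1 \<le> b" "b < k" shows "peq (b # B k) (B k @ [Suc b])"
  using peq_rev[OF L2[OF assms]] unfolding B_def by simp

lemma set_delta: "set (delta k) \<subseteq> {1..<k}"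
  by (induction k) (auto simp: A_def)

lemma set_A: "set (A k) = {1..<Suc k}" by (auto simp: A_def)

lemma L4: "peq (delta (Suc k)) (delta k @ B k)"
proof (induction k)
  case 0 then show ?case by (simp add: A_def B_def)
next
  case (Suc k)
  have "delta (Suc (Suc k)) = A (Suc k) @ delta (Suc k)" by simp
  also have "peq \<dots> (A (Suc k) @ delta k @ B k)" using Suc by (rule peq_appL)
  also have "A (Suc k) @ delta k @ B k = A k @ (Suc k # delta k) @ B k" by (simp add: A_def)
  also have "peq \<dots> (A k @ (delta k @ [Suc k]) @ B k)"
    using far_comm[of "delta k" "Suc k"] set_delta[of k]
    by (intro peq_appL peq_appR) (force simp: far_def)
  also have "\<dots> = delta (Suc k) @ B (Suc k)" by (simp add: A_def B_def)
  finally show ?case .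
qed

lemma D1: "1 \<le> a \<Longrightarrow> a \<le> k \<Longrightarrow> \<exists>X. peq (delta (Suc k)) (a # X)"
proof (induction k arbitrary: a)
  case 0 then show ?case by simp
next
  case (Suc k)
  show ?case
  proof (cases "a = 1")
    case True
    have "A (Suc k) = 1 # [2..<Suc (Suc k)]" by (simp add: A_def upt_conv_Cons numeral_2_eq_2)
    then have "delta (Suc (Suc k)) = a # ([2..<Suc (Suc k)] @ delta (Suc k))" using True by simp
    then show ?thesis by (metis rtranclp.rtrancl_refl)
  next
    case False
    then obtain b where ab: "a = Suc b" "1 \<le> b" "b \<le> k" using Suc.prems by (cases a) auto
    then obtain X where X: "peq (delta (Suc k)) (b # X)" using Suc.IH by blast
    have "delta (Suc (Suc k)) = A (Suc k) @ delta (Suc k)" by simp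
    also have "peq \<dots> (A (Suc k) @ b # X)" using X by (rule peq_appL)
    also have "peq \<dots> (Suc b # A (Suc k) @ X)"
      using peq_appR[OF L2[of b "Suc k"], of X] ab by simp
    finally show ?thesis using ab by blast
  qed
qed

lemma D2: "1 \<le> b \<Longrightarrow> b \<le> k \<Longrightarrow> peq (b # delta (Suc k)) (delta (Suc k) @ [Suc k - b])"
proof (induction k arbitrary: b)
  case 0 then show ?case by simp
next
  case (Suc k)
  show ?case
  proof (cases "b = 1")
    case True
    show ?thesis
    proof (cases "k = 0")
      case True
      then show ?thesis using \<open>b = 1\<close> by (simp add: A_def)
    next
      case False
      have "peq (b # delta (Suc (Suc k))) (1 # delta (Suc k) @ B (Suc k))"
        using peq_Cons[OF L4[of "Suc k"]] True by simp
      also have "peq \<dots> ((delta (Suc k) @ [k]) @ B (Suc k))"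
        using peq_appR[OF Suc.IH[of 1], of "B (Suc k)"] False by simp
      also have "\<dots> = delta (Suc k) @ (k # B (Suc k))" by simp
      also have "peq \<dots> (delta (Suc k) @ B (Suc k) @ [Suc k])"
        using L3[of k "Suc k"] False by (intro peq_appL) simp
      also have "peq \<dots> (delta (Suc (Suc k)) @ [Suc k])"
        using peq_appR[OF peq_sym[OF L4[of "Suc k"]], of "[Suc k]"] by simp
      finally show ?thesis using True by simp
    qed
  next
    case False
    then obtain c where bc: "b = Suc c" "1 \<le> c" "c \<le> k" using Suc.prems by (cases b) auto
    have "b # delta (Suc (Suc k)) = (Suc c # A (Suc k)) @ delta (Suc k)" using bc by simp
    also have "peq \<dots> ((A (Suc k) @ [c]) @ delta (Suc k))"
      using L2[of c "Suc k"] bc peq_sym by (intro peq_appR) auto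
    also have "\<dots> = A (Suc k) @ (c # delta (Suc k))" by simp
    also have "peq \<dots> (A (Suc k) @ delta (Suc k) @ [Suc k - c])"
      using Suc.IH[of c] bc by (intro peq_appL) simp
    finally show ?thesis using bc by simp
  qed
qed


definition inr :: "nat \<Rightarrow> nat list \<Rightarrow> bool" where "inr n P \<longleftrightarrow> set P \<subseteq> {1..<n}"
definition inrw :: "nat \<Rightarrow> bword \<Rightarrow> bool" where "inrw n w \<longleftrightarrow> fst ` set w \<subseteq> {1..<n}"

definition tau :: "nat \<Rightarrow> nat list \<Rightarrow> nat list" where "tau n P = map (\<lambda>x. n - x) P"

definition Dpow :: "nat \<Rightarrow> nat \<Rightarrow> nat list" where "Dpow n k = concat (replicate k (delta n))"

definition Da :: "nat \<Rightarrow> nat \<Rightarrow> nat list" where "Da n a = (SOME X. peq (delta n) (a#X))"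

lemma Dpow_Suc: "Dpow n (Suc k) = delta n @ Dpow n k" by (simp add: Dpow_def)
lemma Dpow_Suc': "Dpow n (Suc k) = Dpow n k @ delta n"
  by (induction k) (auto simp: Dpow_def)
lemma Dpow_0[simp]: "Dpow n 0 = []" by (simp add: Dpow_def)
lemma Dpow_add: "Dpow n (a + b) = Dpow n a @ Dpow n b" by (simp add: Dpow_def replicate_add)
lemma Dpow_comm: "Dpow n a @ Dpow n b = Dpow n b @ Dpow n a"
  by (metis Dpow_add add.commute)

lemma inr_D: "inr n (delta n)" using set_delta unfolding inr_def by blast
lemma inr_app[simp]: "inr n (x@y) \<longleftrightarrow> inr n x \<and> inr n y" by (auto simp: inr_def)
lemma inr_Cons[simp]: "inr n (a#y) \<longleftrightarrow> (1 \<le> a \<and> a < n) \<and> inr n y" by (auto simp: inr_def)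
lemma inr_Nil[simp]: "inr n []" by (simp add: inr_def)
lemma inr_Dpow: "inr n (Dpow n k)" using inr_D by (induction k) (auto simp: Dpow_Suc)
lemma inr_peq: "peq x y \<Longrightarrow> inr n x \<Longrightarrow> inr n y" using peq_set unfolding inr_def by metis

context
  fixes n :: nat
  assumes n2: "n \<ge> 2"
begin

lemma DD1: "1 \<le> a \<Longrightarrow> a < n \<Longrightarrow> peq (delta n) (a # Da n a)"
proof -
  assume a: "1 \<le> a" "a < n"
  obtain k where k: "n = Suc k" using n2 by (cases n) auto
  have "\<exists>X. peq (delta n) (a#X)" using D1[of a k] a k by simp
  then show ?thesis unfolding Da_def by (rule someI_ex)
qed

lemma inr_Da: "1 \<le> a \<Longrightarrow> a < n \<Longrightarrow> inr n (Da n a)"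
  using inr_peq[OF DD1 inr_D] by simp

lemma DD2: "1 \<le> b \<Longrightarrow> b < n \<Longrightarrow> peq (b # delta n) (delta n @ [n - b])"
proof -
  assume a: "1 \<le> b" "b < n"
  obtain k where k: "n = Suc k" using n2 by (cases n) auto
  show ?thesis using D2[of b k] a k by simp
qed

lemma PD: "inr n P \<Longrightarrow> peq (P @ delta n) (delta n @ tau n P)"
proof (induction P)
  case Nil then show ?case by (simp add: tau_def)
next
  case (Cons b P)
  have "peq (b # P @ delta n) (b # delta n @ tau n P)" using Cons by (simp add: peq_Cons)
  also have "peq \<dots> ((delta n @ [n-b]) @ tau n P)"
    using DD2[of b] Cons.prems peq_appR[of "b # delta n" "delta n @ [n-b]" "tau n P"] by simp
  finally show ?case by (simp add: tau_def)
qed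

lemma prel_tau: "prel r r' \<Longrightarrow> inr n r \<Longrightarrow> prel (tau n r) (tau n r')"
proof (induction rule: prel.induct)
  case (rf a b)
  then have "far (n-a) (n-b)" by (auto simp: far_def)
  then show ?case by (simp add: tau_def prel.rf)
next
  case (rb a b)
  then have "adj (n-a) (n-b)" by (auto simp: adj_def)
  then show ?case by (simp add: tau_def prel.rb)
qed

lemma pstep_tau: "pstep x y \<Longrightarrow> inr n x \<Longrightarrow> pstep (tau n x) (tau n y)"
proof (induction rule: pstep.induct)
  case (st r r' u v)
  have "pstep (tau n u @ tau n r @ tau n v) (tau n u @ tau n r' @ tau n v)"
    using prel_tau[OF st(1)] st(2) by (intro pstep.st) simp
  then show ?case by (simp add: tau_def)
qed

lemma peq_tau: "peq x y \<Longrightarrow> inr n x \<Longrightarrow> peq (tau n x) (tau n y)"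
proof (induction rule: rtranclp_induct)
  case base then show ?case by simp
next
  case (step y z)
  have "inr n y" using inr_peq[OF step(1) step(4)] .
  then show ?case using step pstep_tau by (meson rtranclp.rtrancl_into_rtrancl)
qed

lemma tauD: "peq (tau n (delta n)) (delta n)"
proof -
  have "peq (delta n @ delta n) (delta n @ tau n (delta n))" using PD[OF inr_D] .
  then show ?thesis using cancelL peq_sym by blast
qed

lemma tau_app: "tau n (x@y) = tau n x @ tau n y" by (simp add: tau_def)

lemma tau_Dpow: "peq (tau n (Dpow n k)) (Dpow n k)"
  by (induction k) (auto simp: Dpow_Suc tau_app tau_def[of n "[]"] intro: peq_app2 tauD)

lemma DaT: "1 \<le> a \<Longrightarrow> a < n \<Longrightarrow> peq (Da n a @ [n-a]) (delta n)"
proof -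
  assume a: "1 \<le> a" "a < n"
  have "peq (a # Da n a @ [n-a]) (delta n @ [n-a])" using peq_appR[OF peq_sym[OF DD1[OF a]]] by simp
  also have "peq \<dots> (a # delta n)" using peq_sym[OF DD2[OF a]] .
  finally show ?thesis using cancel1 by blast
qed

fun F :: "bword \<Rightarrow> nat list \<times> nat" where
  "F [] = ([], 0)"
| "F ((a,e)#w) = (if e then (a # fst (F w), snd (F w))
                   else (Da n a @ tau n (fst (F w)), Suc (snd (F w))))"

definition eqv :: "nat list \<times> nat \<Rightarrow> nat list \<times> nat \<Rightarrow> bool" where
  "eqv x y \<longleftrightarrow> peq (fst x @ Dpow n (snd y)) (fst y @ Dpow n (snd x))"

lemma F_inr: "inrw n w \<Longrightarrow> inr n (fst (F w))"
proof (induction w)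
  case Nil then show ?case by simp
next
  case (Cons x w)
  obtain a e where x: "x = (a,e)" by (cases x)
  have a: "1 \<le> a" "a < n" and w: "inrw n w" using Cons.prems x by (auto simp: inrw_def)
  have "\<forall>x\<in>set (fst (F w)). 1 \<le> x \<and> x < n" using Cons.IH[OF w] by (auto simp: inr_def)
  then have "inr n (tau n (fst (F w)))" by (auto simp: inr_def tau_def)
  then show ?case using x a Cons.IH[OF w] inr_Da[OF a] by auto
qed

lemma eqv_refl: "eqv x x" by (simp add: eqv_def)
lemma eqv_sym: "eqv x y \<Longrightarrow> eqv y x" by (simp add: eqv_def peq_sym)
lemma eqv_trans: "eqv x y \<Longrightarrow> eqv y z \<Longrightarrow> eqv x z"
proof -
  obtain P k where x: "x = (P,k)" by (cases x)
  obtain P' k' where y: "y = (P',k')" by (cases y)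
  obtain P'' k'' where z: "z = (P'',k'')" by (cases z)
  assume "eqv x y" "eqv y z"
  then have 1: "peq (P @ Dpow n k') (P' @ Dpow n k)" and 2: "peq (P' @ Dpow n k'') (P'' @ Dpow n k')"
    using x y z by (auto simp: eqv_def)
  have "peq ((P @ Dpow n k'') @ Dpow n k') ((P @ Dpow n k') @ Dpow n k'')" by (simp add: Dpow_comm)
  also have "peq \<dots> ((P' @ Dpow n k) @ Dpow n k'')" using 1 by (rule peq_appR)
  also have "\<dots> = (P' @ Dpow n k'') @ Dpow n k" by (simp add: Dpow_comm)
  also have "peq \<dots> ((P'' @ Dpow n k') @ Dpow n k)" using 2 by (rule peq_appR)
  also have "\<dots> = (P'' @ Dpow n k) @ Dpow n k'" by (simp add: Dpow_comm)
  finally have "peq (P @ Dpow n k'') (P'' @ Dpow n k)" by (rule cancelR)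
  then show "eqv x z" using x z by (simp add: eqv_def)
qed

lemma eqv_Cons:
  assumes a: "1 \<le> a" "a < n" and ix: "inr n (fst (F x))" and e: "eqv (F x) (F y)"
  shows "eqv (F ((a,b)#x)) (F ((a,b)#y))"
proof -
  obtain P k where x: "F x = (P,k)" by (cases "F x")
  obtain P' k' where y: "F y = (P',k')" by (cases "F y")
  have 1: "peq (P @ Dpow n k') (P' @ Dpow n k)" using e x y by (simp add: eqv_def)
  show ?thesis
  proof (cases b)
    case True
    then show ?thesis using x y 1 by (simp add: eqv_def peq_Cons)
  next
    case False
    have i: "inr n (P @ Dpow n k')" using ix x inr_Dpow by simp
    have "peq (tau n P @ Dpow n k') (tau n P @ tau n (Dpow n k'))"
      using peq_sym[OF tau_Dpow] by (rule peq_appL)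
    also have "\<dots> = tau n (P @ Dpow n k')" by (simp add: tau_app)
    also have "peq \<dots> (tau n (P' @ Dpow n k))" using peq_tau[OF 1 i] .
    also have "\<dots> = tau n P' @ tau n (Dpow n k)" by (simp add: tau_app)
    also have "peq \<dots> (tau n P' @ Dpow n k)" using tau_Dpow by (rule peq_appL)
    finally have 2: "peq (tau n P @ Dpow n k') (tau n P' @ Dpow n k)" .
    have "peq (Da n a @ (tau n P @ Dpow n k') @ delta n) (Da n a @ (tau n P' @ Dpow n k) @ delta n)"
      using peq_app[OF 2] .
    then show ?thesis using x y False by (simp add: eqv_def Dpow_Suc')
  qed
qed

lemma eqv_app: "inrw n (u @ x) \<Longrightarrow> eqv (F x) (F y) \<Longrightarrow> eqv (F (u@x)) (F (u@y))"
proof (induction u)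
  case Nil then show ?case by simp
next
  case (Cons c u)
  obtain a b where c: "c = (a,b)" by (cases c)
  have a: "1 \<le> a" "a < n" and iu: "inrw n (u@x)" using Cons.prems c by (auto simp: inrw_def)
  show ?case using eqv_Cons[OF a F_inr[OF iu] Cons.IH[OF iu Cons.prems(2)]] c by simp
qed

lemma eqv_cancelT: "1 \<le> a \<Longrightarrow> a < n \<Longrightarrow> inrw n v \<Longrightarrow> eqv (F ((a,True)#(a,False)#v)) (F v)"
proof -
  assume a: "1 \<le> a" "a < n" and v: "inrw n v"
  obtain P k where Fv: "F v = (P,k)" by (cases "F v")
  have iP: "inr n P" using F_inr[OF v] Fv by simp
  have "peq ((a # Da n a) @ tau n P @ Dpow n k) (delta n @ tau n P @ Dpow n k)"
    using peq_sym[OF DD1[OF a]] by (rule peq_appR)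
  also have "peq \<dots> ((P @ delta n) @ Dpow n k)" using peq_appR[OF peq_sym[OF PD[OF iP]]] by simp
  finally show ?thesis using Fv by (simp add: eqv_def Dpow_Suc)
qed

lemma eqv_cancelF: "1 \<le> a \<Longrightarrow> a < n \<Longrightarrow> inrw n v \<Longrightarrow> eqv (F ((a,False)#(a,True)#v)) (F v)"
proof -
  assume a: "1 \<le> a" "a < n" and v: "inrw n v"
  obtain P k where Fv: "F v = (P,k)" by (cases "F v")
  have iP: "inr n P" using F_inr[OF v] Fv by simp
  have "peq ((Da n a @ [n-a]) @ tau n P @ Dpow n k) (delta n @ tau n P @ Dpow n k)"
    using DaT[OF a] by (rule peq_appR)
  also have "peq \<dots> ((P @ delta n) @ Dpow n k)" using peq_appR[OF peq_sym[OF PD[OF iP]]] by simp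
  finally show ?thesis using Fv by (simp add: eqv_def Dpow_Suc tau_def)
qed

lemma inrw_pres: "braid_eq n w w' \<Longrightarrow> inrw n w \<longleftrightarrow> inrw n w'"
  by (induction rule: braid_eq.induct) (auto simp: inrw_def)

lemma eqv_main: "braid_eq n w w' \<Longrightarrow> inrw n w \<Longrightarrow> eqv (F w) (F w')"
proof (induction rule: braid_eq.induct)
  case (refl w) show ?case by (rule eqv_refl)
next
  case (sym w v) then show ?case using inrw_pres eqv_sym by blast
next
  case (trans u v w) then show ?case using inrw_pres eqv_trans by blast
next
  case (cancel a u e v)
  have iv: "inrw n v" using cancel.prems by (auto simp: inrw_def)
  have "eqv (F ([(a, e), (a, \<not> e)] @ v)) (F v)"
    using eqv_cancelT[OF cancel(1,2) iv] eqv_cancelF[OF cancel(1,2) iv] by (cases e) auto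
  then show ?case using eqv_app[OF cancel.prems] by simp
next
  case (comm a b u v)
  have "eqv (F ([(a, True), (b, True)] @ v)) (F ([(b, True), (a, True)] @ v))"
    using comm(1-5) fc0[of a b] by (simp add: eqv_def far_def)
  then show ?case using eqv_app[OF comm.prems] by simp
next
  case (braid a u v)
  have "eqv (F ([(a, True), (a+1, True), (a, True)] @ v)) (F ([(a+1, True), (a, True), (a+1, True)] @ v))"
    using bc0[of a "a+1"] by (simp add: eqv_def adj_def)
  then show ?case using eqv_app[OF braid.prems] by simp
qed

lemma F_pos: "F (pos p) = (p, 0)"
  by (induction p) (auto simp: pos_def)

lemma embed: "braid_eq n (pos p) (pos q) \<Longrightarrow> inr n p \<Longrightarrow> peq p q"
proof -
  assume b: "braid_eq n (pos p) (pos q)" and i: "inr n p"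
  have "inrw n (pos p)" using i by (auto simp: inrw_def inr_def pos_def)
  then have "eqv (F (pos p)) (F (pos q))" using eqv_main[OF b] by blast
  then show ?thesis by (simp add: F_pos eqv_def)
qed

end

lemma pos_app: "pos (x@y) = pos x @ pos y" by (simp add: pos_def)

lemma pstep_braid: "pstep x y \<Longrightarrow> inr n x \<Longrightarrow> braid_eq n (pos x) (pos y)"
proof (induction rule: pstep.induct)
  case (st r r' u v)
  have ir: "inr n r" using st by simp
  have "braid_eq n (pos u @ pos r @ pos v) (pos u @ pos r' @ pos v)"
    using st(1) ir
  proof (cases rule: prel.cases)
    case (rf a b)
    then show ?thesis using ir braid_eq.comm[of a n b "pos u" "pos v"] by (auto simp: pos_def far_def)
  next
    case (rb a b)
    then show ?thesis
    proof (cases "b = Suc a")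
      case True
      then show ?thesis using rb ir braid_eq.braid[of a n "pos u" "pos v"] by (auto simp: pos_def)
    next
      case False
      then have "a = Suc b" using rb by (auto simp: adj_def)
      then show ?thesis using rb ir braid_eq.sym[OF braid_eq.braid[of b n "pos u" "pos v"]] by (auto simp: pos_def)
    qed
  qed
  then show ?case by (simp add: pos_app)
qed

lemma peq_braid: "peq x y \<Longrightarrow> inr n x \<Longrightarrow> braid_eq n (pos x) (pos y)"
proof (induction rule: rtranclp_induct)
  case base show ?case by (rule braid_eq.refl)
next
  case (step y z)
  then show ?case using pstep_braid inr_peq braid_eq.trans by metis
qed


lemma Div: "adj k j \<Longrightarrow> 1 \<le> r \<Longrightarrow> peq (replicate r j @ Y) (k # X') \<Longrightarrow> \<exists>Z. peq Y (k # j # Z)"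
proof (induction r arbitrary: X')
  case 0 then show ?case by simp
next
  case (Suc r)
  show ?case
  proof (cases "r = 0")
    case True
    then have "peq (j # Y) (k # X')" using Suc.prems by simp
    then show ?thesis using garside[of j Y k X'] adj_sym[OF Suc.prems(1)] unfolding R_def by blast
  next
    case False
    have "peq (j # (replicate r j @ Y)) (k # X')" using Suc.prems by simp
    then obtain Z' where "peq (replicate r j @ Y) (k # j # Z')"
      using garside[of j _ k X'] adj_sym[OF Suc.prems(1)] unfolding R_def by blast
    then show ?thesis using Suc.IH[of "j # Z'"] Suc.prems(1) False by simp
  qed
qed

lemma jkj: "adj k j \<Longrightarrow> peq (replicate m j @ k # j # Z) (k # j # replicate m k @ Z)"
proof (induction m)
  case 0 then show ?case by simp
next
  case (Suc m)
  have "peq (j # replicate m j @ k # j # Z) (j # k # j # replicate m k @ Z)"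
    using Suc by (simp add: peq_Cons)
  also have "peq \<dots> (k # j # k # replicate m k @ Z)" using bc0 adj_sym[OF Suc.prems] by blast
  finally show ?case by simp
qed

lemma farj: "far k j \<Longrightarrow> peq (replicate m j @ k # X) (k # replicate m j @ X)"
proof (induction m)
  case 0 then show ?case by simp
next
  case (Suc m)
  have "peq (j # replicate m j @ k # X) (j # k # replicate m j @ X)"
    using Suc by (simp add: peq_Cons)
  also have "peq \<dots> (k # j # replicate m j @ X)" using fc0 far_sym[OF Suc.prems] by blast
  finally show ?case by simp
qed

lemma rep_Cons: "replicate m j @ j # W = j # replicate m j @ W"
  by (induction m) auto

lemma M: "1 \<le> m \<Longrightarrow> peq (replicate m j @ W) (W @ replicate m i) \<Longrightarrow> peq (j # W) (W @ [i])"
proof (induction "length W" arbitrary: W j rule: less_induct)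
  case less
  show ?case
  proof (cases W)
    case Nil
    then have "set (replicate m j) = set (replicate m i)" using peq_set less.prems by simp
    then have "i = j" using less.prems(1) by simp
    then show ?thesis using Nil by simp
  next
    case (Cons k W')
    have "k = j \<or> far k j \<or> adj k j" using trich by blast
    moreover
    { assume "k = j"
      have e: "replicate m j @ W = j # (replicate m j @ W')" unfolding Cons \<open>k = j\<close> by (rule rep_Cons)
      have "peq (j # (replicate m j @ W')) (j # (W' @ replicate m i))"
        using less.prems(2) e Cons \<open>k = j\<close> by (metis append_Cons)
      then have "peq (replicate m j @ W') (W' @ replicate m i)" by (rule cancel1)
      then have "peq (j # W') (W' @ [i])" using less Cons by simp
      then have ?thesis using Cons \<open>k = j\<close> by (simp add: peq_Cons)
    }
    moreover
    { assume kj: "far k j"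
      have "peq (k # (replicate m j @ W')) (replicate m j @ W)" using farj[OF kj] Cons peq_sym by simp
      also have "peq \<dots> (k # (W' @ replicate m i))" using less.prems Cons by simp
      finally have "peq (replicate m j @ W') (W' @ replicate m i)" by (rule cancel1)
      then have "peq (j # W') (W' @ [i])" using less Cons by simp
      then have "peq (k # j # W') (k # W' @ [i])" by (rule peq_Cons)
      moreover have "peq (j # k # W') (k # j # W')" using fc0 far_sym[OF kj] by blast
      ultimately have ?thesis using Cons by (simp add: peq_trans)
    }
    moreover
    { assume kj: "adj k j"
      have h: "peq (replicate m j @ W) (k # (W' @ replicate m i))" using less.prems Cons by simp
      then obtain Z where "peq W (k # j # Z)" using Div[OF kj less.prems(1)] by blast
      then have W': "peq W' (j # Z)" using Cons cancel1 by blast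
      have lZ: "length Z < length W" using peq_length[OF W'] Cons by simp
      have "peq ([k,j] @ (replicate m k @ Z)) (replicate m j @ k # j # Z)"
        using jkj[OF kj] peq_sym by simp
      also have "peq \<dots> (replicate m j @ W)" using Cons W' peq_sym by (simp add: peq_appL peq_Cons)
      also have "peq \<dots> (W @ replicate m i)" using less.prems(2) .
      also have "peq \<dots> ([k,j] @ (Z @ replicate m i))" using Cons peq_Cons[OF peq_appR[OF W', of "replicate m i"], of k] by simp
      finally have "peq (replicate m k @ Z) (Z @ replicate m i)" by (rule cancelL)
      then have IH: "peq (k # Z) (Z @ [i])" using less.hyps[OF lZ] less.prems(1) by blast
      have "peq (j # W) (j # k # j # Z)" using Cons W' by (simp add: peq_Cons)
      also have "peq \<dots> (k # j # k # Z)" using bc0 adj_sym[OF kj] by blast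
      also have "peq \<dots> (k # j # Z @ [i])" using IH by (simp add: peq_Cons)
      also have "peq \<dots> (W @ [i])" using Cons peq_Cons[OF peq_appR[OF peq_sym[OF W'], of "[i]"], of k] by simp
      finally have ?thesis .
    }
    ultimately show ?thesis by blast
  qed
qed

theorem theorem2p12:
  fixes n i j m :: nat and W :: "nat list"
  assumes "n \<ge> 2"
    and "i \<in> {1..<n}" and "j \<in> {1..<n}"
    and "m \<ge> 1"
    and "set W \<subseteq> {1..<n}"
    and "braid_eq n (pos W @ pos (replicate m i)) (pos (replicate m j) @ pos W)"
  shows "braid_eq n (pos W @ pos [i]) (pos [j] @ pos W)"
proof -
  have b: "braid_eq n (pos (replicate m j @ W)) (pos (W @ replicate m i))"
    using braid_eq.sym[OF assms(6)] by (simp add: pos_app)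
  have i: "inr n (replicate m j @ W)" using assms(3,5) by (auto simp: inr_def)
  have "peq (replicate m j @ W) (W @ replicate m i)" using embed[OF assms(1) b i] .
  then have "peq (j # W) (W @ [i])" using M assms(4) by blast
  then have "braid_eq n (pos (j # W)) (pos (W @ [i]))" using peq_braid assms(3,5) by (auto simp: inr_def)
  then show ?thesis using braid_eq.sym by (simp add: pos_app pos_def)
qed

end
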